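(* Let $\delta\in(0,1)$ and let $\hat r_i,b_i:\mathcal A\to\mathbb R$ ($i\in[m]$) be data-dependent functions such that $b$ is a bonus term for $\hat r$ at level $\delta$. Let $\pi^{\mathrm{out}}$ be the output of the surrogate-minimization procedure described in the context. Then, with probability at least $1-\delta$, for every Nash equilibrium $\pi^*$, $$\mathrm{Gap}(\pi^{\mathrm{out}})\le 2\max_{i\in[m]}\Big[\max_{a_i'\in\mathcal A_i}\mathbb E_{\bm a_{-i}\sim\pi^*_{-i}}\, b_i(a_i',\bm a_{-i})+\mathbb E_{\bm a\sim\pi^*}\, b_i(\bm a)\Big].$$
   Context: Congestion game setting. There are $m\ge 1$ players and a finite facility set $\mathcal F$ with $F=|\mathcal F|$. Each player $i\in[m]$ has a nonempty finite action set $\mathcal A_i\subseteq 2^{\mathcal F}$ (an action is a subset of facilities). The set of joint actions $\bm a=(a_1,\dots,a_m)$ is $\mathcal A=\prod_{i=1}^m\mathcal A_i$. For $f\in\mathcal F$ let $n^f(\bm a)=|\{i\in[m]: f\in a_i\}|$. For each facility $f$ and each $\ell\in\{1,\dots,m\}$ there is a reward distribution $R^f(\cdot\mid \ell)$ supported in $[-1,1]$ with mean $r^f(\ell)$. The mean reward of player $i$ under $\bm a$ is $r_i(\bm a)=\sum_{f\in a_i} r^f(n^f(\bm a))$. A product policy is $\pi=\pi_1\otimes\cdots\otimes\pi_m$ with $\pi_i\in\Delta(\mathcal A_i)$; $(\pi_i',\pi_{-i})$ denotes $\pi$ with the $i$-th component replaced by $\pi_i'$. Let $V_i^\pi=\mathbb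 E_{\bm a\sim\pi}[r_i(\bm a)]$ and $\mathrm{Gap}(\pi)=\max_{i\in[m]}\big[\max_{\pi_i'\in\Delta(\mathcal A_i)}V_i^{(\pi_i',\pi_{-i})}-V_i^{\pi}\big]$. A Nash equilibrium (NE) is a product policy $\pi$ with $\mathrm{Gap}(\pi)=0$. Offline data: a dataset $\mathcal D=\{(\bm a^k,\bm r^k)\}_{k=1}^n$ in which $\bm a^1,\dots,\bm a^n$ are i.i.d. draws from a fixed distribution $\rho\in\Delta(\mathcal A)$ and the reward information $\bm r^k$ is generated from the game given $\bm a^k$. Bonus term: functions $\hat r_i,b_i:\mathcal A\to\mathbb R$ (computed from $\mathcal D$) are such that $b$ is a bonus term for $\hat r$ at level $\delta$ if, with probability at least $1-\delta$, $|r_i(\bm a)-\hat r_i(\bm a)|\le b_i(\bm a)$ for all $i\in[m]$ and all $\bm a\in\mathcal A$. Surrogate minimization: for a product policy $\pi$ define $\overline V_i^{\pi}=\mathbb E_{\bm a\sim\pi}[\hat r_i(\bm a)+b_i(\bm a)]$, $\underline V_i^{\pi}=\mathbb E_{\bm a\sim\pi}[\hat r_i(\bm a)-b_i(\bm a)]$, and $\overline V_i^{\dagger,\pi_{-i}}=\max_{\pi_i'\in\Delta(\mathcal A_i)}\overline V_i^{(\pi_i',\pi_{-i})}$. The output is any $\pi^{\mathrm{out}}\in\arg\min_{\pi\text{ product}}\max_{i\in[m]}\big[\overline V_i^{\dagger,\pi_{-i}}-\underline V_i^{\pi}\big]$. *)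

theory Defs
  imports "HOL-Probability.Probability"
begin

type_synonym 'f joint = "nat \<Rightarrow> 'f set"

definition joint_actions :: "nat \<Rightarrow> (nat \<Rightarrow> 'f set set) \<Rightarrow> 'f joint set" where
  "joint_actions m A = PiE {..<m} A"

definition load :: "nat \<Rightarrow> 'f joint \<Rightarrow> 'f \<Rightarrow> nat" where
  "load m a f = card {i. i < m \<and> f \<in> a i}"

definition mean_reward :: "nat \<Rightarrow> ('f \<Rightarrow> nat \<Rightarrow> real) \<Rightarrow> nat \<Rightarrow> 'f joint \<Rightarrow> real" where
  "mean_reward m rf i a = (\<Sum>f\<in>a i. rf f (load m a f))"

definition is_product_policy :: "nat \<Rightarrow> (nat \<Rightarrow> 'f set set) \<Rightarrow> (nat \<Rightarrow> 'f set pmf) \<Rightarrow> bool" where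
  "is_product_policy m A \<pi> \<longleftrightarrow> (\<forall>i<m. set_pmf (\<pi> i) \<subseteq> A i)"

definition expect_prod :: "nat \<Rightarrow> (nat \<Rightarrow> 'f set set) \<Rightarrow> (nat \<Rightarrow> 'f set pmf) \<Rightarrow> ('f joint \<Rightarrow> real) \<Rightarrow> real" where
  "expect_prod m A \<pi> g = (\<Sum>a\<in>joint_actions m A. (\<Prod>i<m. pmf (\<pi> i) (a i)) * g a)"

definition best_resp_val :: "nat \<Rightarrow> (nat \<Rightarrow> 'f set set) \<Rightarrow> (nat \<Rightarrow> 'f set pmf) \<Rightarrow> nat \<Rightarrow> ('f joint \<Rightarrow> real) \<Rightarrow> real" where
  "best_resp_val m A \<pi> i g = (SUP p\<in>{p. set_pmf p \<subseteq> A i}. expect_prod m A (\<pi>(i := p)) g)"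

definition Gap :: "nat \<Rightarrow> (nat \<Rightarrow> 'f set set) \<Rightarrow> ('f \<Rightarrow> nat \<Rightarrow> real) \<Rightarrow> (nat \<Rightarrow> 'f set pmf) \<Rightarrow> real" where
  "Gap m A rf \<pi> = (MAX i\<in>{..<m}. best_resp_val m A \<pi> i (mean_reward m rf i)
                                  - expect_prod m A \<pi> (mean_reward m rf i))"

definition is_NE :: "nat \<Rightarrow> (nat \<Rightarrow> 'f set set) \<Rightarrow> ('f \<Rightarrow> nat \<Rightarrow> real) \<Rightarrow> (nat \<Rightarrow> 'f set pmf) \<Rightarrow> bool" where
  "is_NE m A rf \<pi> \<longleftrightarrow> is_product_policy m A \<pi> \<and> Gap m A rf \<pi> = 0"

text \<open>b is a bonus term for rhat at level delta: with probability at least 1 - delta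
  (over the data, modelled by the probability space M with outcome w),
  |r_i(a) - rhat_i(a)| <= b_i(a) for all players i and joint actions a.\<close>
definition bonus_term ::
  "'w measure \<Rightarrow> real \<Rightarrow> nat \<Rightarrow> (nat \<Rightarrow> 'f set set) \<Rightarrow> ('f \<Rightarrow> nat \<Rightarrow> real)
   \<Rightarrow> ('w \<Rightarrow> nat \<Rightarrow> 'f joint \<Rightarrow> real) \<Rightarrow> ('w \<Rightarrow> nat \<Rightarrow> 'f joint \<Rightarrow> real) \<Rightarrow> bool" where
  "bonus_term M \<delta> m A rf rhat b \<longleftrightarrow>
     (\<exists>E\<in>sets M. measure M E \<ge> 1 - \<delta> \<and>
        (\<forall>w\<in>E. \<forall>i<m. \<forall>a\<in>joint_actions m A. \<bar>mean_reward m rf i a - rhat w i a\<bar> \<le> b w i a))"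

definition surrogate_obj ::
  "nat \<Rightarrow> (nat \<Rightarrow> 'f set set) \<Rightarrow> (nat \<Rightarrow> 'f joint \<Rightarrow> real) \<Rightarrow> (nat \<Rightarrow> 'f joint \<Rightarrow> real)
   \<Rightarrow> (nat \<Rightarrow> 'f set pmf) \<Rightarrow> real" where
  "surrogate_obj m A rh bb \<pi> = (MAX i\<in>{..<m}.
      best_resp_val m A \<pi> i (\<lambda>a. rh i a + bb i a) - expect_prod m A \<pi> (\<lambda>a. rh i a - bb i a))"

definition is_surrogate_minimizer ::
  "nat \<Rightarrow> (nat \<Rightarrow> 'f set set) \<Rightarrow> (nat \<Rightarrow> 'f joint \<Rightarrow> real) \<Rightarrow> (nat \<Rightarrow> 'f joint \<Rightarrow> real)
   \<Rightarrow> (nat \<Rightarrow> 'f set pmf) \<Rightarrow> bool" where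
  "is_surrogate_minimizer m A rh bb \<pi> \<longleftrightarrow> is_product_policy m A \<pi> \<and>
     (\<forall>\<pi>'. is_product_policy m A \<pi>' \<longrightarrow> surrogate_obj m A rh bb \<pi> \<le> surrogate_obj m A rh bb \<pi>')"

end

theory Submission
  imports Defs
begin

lemma finJ: "\<forall>j<m. finite (A j) \<Longrightarrow> finite (joint_actions m A)"
  unfolding joint_actions_def by (rule finite_PiE) auto

lemma prod_upd: fixes i m :: nat shows "i < m \<Longrightarrow> (\<Prod>j<m. pmf ((\<pi>(i:=q)) j) (a j)) = pmf q (a i) * (\<Prod>j\<in>{..<m}-{i}. pmf (\<pi> j) (a j))"
proof -
  assume i: "i < m"
  have "(\<Prod>j<m. pmf ((\<pi>(i:=q)) j) (a j)) = pmf ((\<pi>(i:=q)) i) (a i) * (\<Prod>j\<in>{..<m}-{i}. pmf ((\<pi>(i:=q)) j) (a j))"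
    using i by (subst prod.remove[OF finite_lessThan, where x=i]) auto
  also have "(\<Prod>j\<in>{..<m}-{i}. pmf ((\<pi>(i:=q)) j) (a j)) = (\<Prod>j\<in>{..<m}-{i}. pmf (\<pi> j) (a j))"
    by (rule prod.cong) auto
  finally show ?thesis by simp
qed

lemma decomp:
  assumes i: "i < m" and fin: "\<forall>j<m. finite (A j)" and p: "set_pmf p \<subseteq> A i"
  shows "expect_prod m A (\<pi>(i:=p)) g = (\<Sum>a'\<in>A i. pmf p a' * expect_prod m A (\<pi>(i:=return_pmf a')) g)"
proof -
  define P where "P a = (\<Prod>j\<in>{..<m}-{i}. pmf (\<pi> j) (a j))" for a :: "'a joint"
  have "(\<Sum>a'\<in>A i. pmf p a' * expect_prod m A (\<pi>(i:=return_pmf a')) g)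
      = (\<Sum>a'\<in>A i. \<Sum>a\<in>joint_actions m A. pmf p a' * (pmf (return_pmf a') (a i) * P a * g a))"
    unfolding expect_prod_def P_def prod_upd[OF i] by (simp add: sum_distrib_left mult.assoc)
  also have "\<dots> = (\<Sum>a\<in>joint_actions m A. \<Sum>a'\<in>A i. pmf p a' * (pmf (return_pmf a') (a i) * P a * g a))"
    by (rule sum.swap)
  also have "\<dots> = (\<Sum>a\<in>joint_actions m A. pmf p (a i) * P a * g a)"
  proof (rule sum.cong[OF refl])
    fix a assume a: "a \<in> joint_actions m A"
    then have ai: "a i \<in> A i" using i unfolding joint_actions_def by (auto simp: PiE_def Pi_def)
    have "(\<Sum>a'\<in>A i. pmf p a' * (pmf (return_pmf a') (a i) * P a * g a))
        = (\<Sum>a'\<in>A i. if a' = a i then pmf p a' * P a * g a else 0)"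
      by (rule sum.cong) (auto simp: pmf_return)
    also have "\<dots> = pmf p (a i) * P a * g a" using ai fin i by (simp add: sum.delta')
    finally show "(\<Sum>a'\<in>A i. pmf p a' * (pmf (return_pmf a') (a i) * P a * g a)) = pmf p (a i) * P a * g a" .
  qed
  also have "\<dots> = expect_prod m A (\<pi>(i:=p)) g"
    unfolding expect_prod_def P_def prod_upd[OF i] by (simp add: mult.assoc)
  finally show ?thesis by simp
qed

lemma convex_le:
  assumes "finite S" "set_pmf p \<subseteq> S"
  shows "(\<Sum>a\<in>S. pmf p a * h a) \<le> Max (h ` S)"
proof -
  have ne: "S \<noteq> {}" using assms(2) set_pmf_not_empty[of p] by blast
  have "(\<Sum>a\<in>S. pmf p a * h a) \<le> (\<Sum>a\<in>S. pmf p a * Max (h ` S))"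
    by (rule sum_mono, rule mult_left_mono) (auto simp: assms)
  also have "\<dots> = Max (h ` S)" using sum_pmf_eq_1[OF assms] by (simp add: sum_distrib_right[symmetric])
  finally show ?thesis .
qed

lemma ep_le_max:
  assumes i: "i < m" and fin: "\<forall>j<m. finite (A j)" and p: "set_pmf p \<subseteq> A i"
  shows "expect_prod m A (\<pi>(i:=p)) g \<le> (MAX a'\<in>A i. expect_prod m A (\<pi>(i:=return_pmf a')) g)"
  using decomp[OF assms] convex_le[OF _ p] fin i by simp

lemma ep_mono:
  assumes "\<forall>a\<in>joint_actions m A. f a \<le> g a"
  shows "expect_prod m A \<pi> f \<le> expect_prod m A \<pi> g"
  unfolding expect_prod_def using assms
  by (intro sum_mono mult_left_mono) (auto intro: prod_nonneg)

lemma ep_add: "expect_prod m A \<pi> (\<lambda>a. f a + c * g a) = expect_prod m A \<pi> f + c * expect_prod m A \<pi> g"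
  unfolding expect_prod_def by (simp add: algebra_simps sum.distrib sum_distrib_left)
lemma ep_diff: "expect_prod m A \<pi> (\<lambda>a. f a - c * g a) = expect_prod m A \<pi> f - c * expect_prod m A \<pi> g"
  unfolding expect_prod_def by (simp add: algebra_simps sum_subtractf sum_distrib_left)

lemma br_upper:
  assumes i: "i < m" and fin: "\<forall>j<m. finite (A j)" and p: "set_pmf p \<subseteq> A i"
  shows "expect_prod m A (\<pi>(i:=p)) g \<le> best_resp_val m A \<pi> i g"
  unfolding best_resp_val_def
proof (rule cSUP_upper)
  show "p \<in> {p. set_pmf p \<subseteq> A i}" using p by simp
  show "bdd_above ((\<lambda>p. expect_prod m A (\<pi>(i := p)) g) ` {p. set_pmf p \<subseteq> A i})"
    by (rule bdd_aboveI2[where M="MAX a'\<in>A i. expect_prod m A (\<pi>(i:=return_pmf a')) g"])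
       (use ep_le_max[OF i fin] in auto)
qed

lemma br_least:
  assumes "A i \<noteq> {}" and "\<And>p. set_pmf p \<subseteq> A i \<Longrightarrow> expect_prod m A (\<pi>(i:=p)) g \<le> c"
  shows "best_resp_val m A \<pi> i g \<le> c"
  unfolding best_resp_val_def
proof (rule cSUP_least)
  from assms(1) obtain x where "x \<in> A i" by auto
  then show "{p. set_pmf p \<subseteq> A i} \<noteq> {}" by (auto intro!: exI[of _ "return_pmf x"])
qed (use assms(2) in auto)

lemma main_det:
  fixes m :: nat and A :: "nat \<Rightarrow> 'f set set" and rf rh bb \<pi>o \<pi>s
  defines "r \<equiv> \<lambda>i. mean_reward m rf i"
  assumes m: "m \<ge> 1" and fin: "\<forall>j<m. finite (A j)" and ne: "\<forall>j<m. A j \<noteq> {}"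
    and bon: "\<forall>i<m. \<forall>a\<in>joint_actions m A. \<bar>mean_reward m rf i a - rh i a\<bar> \<le> bb i a"
    and so: "is_surrogate_minimizer m A rh bb \<pi>o"
    and ne_s: "is_NE m A rf \<pi>s"
  shows "Gap m A rf \<pi>o \<le> 2 * (MAX i\<in>{..<m}.
            (MAX a'\<in>A i. expect_prod m A (\<pi>s(i := return_pmf a')) (bb i))
          + expect_prod m A \<pi>s (bb i))"
proof -
  define T where "T i = (MAX a'\<in>A i. expect_prod m A (\<pi>s(i := return_pmf a')) (bb i))
          + expect_prod m A \<pi>s (bb i)" for i
  define S where "S \<pi> i = best_resp_val m A \<pi> i (\<lambda>a. rh i a + bb i a) - expect_prod m A \<pi> (\<lambda>a. rh i a - bb i a)" for \<pi> i
  have I: "{..<m} \<noteq> {}" "finite {..<m}" using m by (auto simp: lessThan_empty_iff)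
  have so_eq: "surrogate_obj m A rh bb \<pi> = (MAX i\<in>{..<m}. S \<pi> i)" for \<pi>
    unfolding surrogate_obj_def S_def by simp
  have prod_s: "is_product_policy m A \<pi>s" using ne_s unfolding is_NE_def by simp
  have step1: "Gap m A rf \<pi>o \<le> surrogate_obj m A rh bb \<pi>o"
    unfolding Gap_def so_eq
  proof (rule Max.boundedI)
    show "finite ((\<lambda>i. best_resp_val m A \<pi>o i (mean_reward m rf i) - expect_prod m A \<pi>o (mean_reward m rf i)) ` {..<m})" by simp
    show "(\<lambda>i. best_resp_val m A \<pi>o i (mean_reward m rf i) - expect_prod m A \<pi>o (mean_reward m rf i)) ` {..<m} \<noteq> {}" using I by simp
    fix x assume "x \<in> (\<lambda>i. best_resp_val m A \<pi>o i (mean_reward m rf i) - expect_prod m A \<pi>o (mean_reward m rf i)) ` {..<m}"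
    then obtain i where i: "i < m" and x: "x = best_resp_val m A \<pi>o i (mean_reward m rf i) - expect_prod m A \<pi>o (mean_reward m rf i)" by auto
    have b1: "best_resp_val m A \<pi>o i (mean_reward m rf i) \<le> best_resp_val m A \<pi>o i (\<lambda>a. rh i a + bb i a)"
    proof (rule br_least)
      show "A i \<noteq> {}" using ne i by simp
      fix p assume p: "set_pmf p \<subseteq> A i"
      have "expect_prod m A (\<pi>o(i:=p)) (mean_reward m rf i) \<le> expect_prod m A (\<pi>o(i:=p)) (\<lambda>a. rh i a + bb i a)"
        by (rule ep_mono) (use bon i in fastforce)
      also have "\<dots> \<le> best_resp_val m A \<pi>o i (\<lambda>a. rh i a + bb i a)" by (rule br_upper[OF i fin p])
      finally show "expect_prod m A (\<pi>o(i:=p)) (mean_reward m rf i) \<le> best_resp_val m A \<pi>o i (\<lambda>a. rh i a + bb i a)" .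
    qed
    have b2: "expect_prod m A \<pi>o (\<lambda>a. rh i a - bb i a) \<le> expect_prod m A \<pi>o (mean_reward m rf i)"
      by (rule ep_mono) (use bon i in fastforce)
    have "x \<le> S \<pi>o i" unfolding x S_def using b1 b2 by simp
    also have "S \<pi>o i \<le> (MAX i\<in>{..<m}. S \<pi>o i)" using i by (intro Max_ge) auto
    finally show "x \<le> (MAX i\<in>{..<m}. S \<pi>o i)" .
  qed
  have step2: "surrogate_obj m A rh bb \<pi>o \<le> surrogate_obj m A rh bb \<pi>s"
    using so prod_s unfolding is_surrogate_minimizer_def by blast
  have step3: "S \<pi>s i \<le> 2 * T i" if i: "i < m" for i
  proof -
    have gap0: "best_resp_val m A \<pi>s i (mean_reward m rf i) - expect_prod m A \<pi>s (mean_reward m rf i) \<le> 0"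
    proof -
      have "best_resp_val m A \<pi>s i (mean_reward m rf i) - expect_prod m A \<pi>s (mean_reward m rf i) \<le> Gap m A rf \<pi>s"
        unfolding Gap_def using i by (intro Max_ge) auto
      then show ?thesis using ne_s unfolding is_NE_def by simp
    qed
    define Mx where "Mx = (MAX a'\<in>A i. expect_prod m A (\<pi>s(i := return_pmf a')) (bb i))"
    have c1: "best_resp_val m A \<pi>s i (\<lambda>a. rh i a + bb i a) \<le> expect_prod m A \<pi>s (mean_reward m rf i) + 2 * Mx"
    proof (rule br_least)
      show "A i \<noteq> {}" using ne i by simp
      fix p assume p: "set_pmf p \<subseteq> A i"
      have "expect_prod m A (\<pi>s(i:=p)) (\<lambda>a. rh i a + bb i a) \<le> expect_prod m A (\<pi>s(i:=p)) (\<lambda>a. mean_reward m rf i a + 2 * bb i a)"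
        by (rule ep_mono) (use bon i in fastforce)
      also have "\<dots> = expect_prod m A (\<pi>s(i:=p)) (mean_reward m rf i) + 2 * expect_prod m A (\<pi>s(i:=p)) (bb i)"
        by (rule ep_add)
      also have "\<dots> \<le> best_resp_val m A \<pi>s i (mean_reward m rf i) + 2 * Mx"
        using br_upper[OF i fin p, of \<pi>s "mean_reward m rf i"] ep_le_max[OF i fin p, of \<pi>s "bb i"] unfolding Mx_def by simp
      also have "\<dots> \<le> expect_prod m A \<pi>s (mean_reward m rf i) + 2 * Mx" using gap0 by simp
      finally show "expect_prod m A (\<pi>s(i:=p)) (\<lambda>a. rh i a + bb i a) \<le> expect_prod m A \<pi>s (mean_reward m rf i) + 2 * Mx" .
    qed
    have c2: "expect_prod m A \<pi>s (\<lambda>a. mean_reward m rf i a - 2 * bb i a) \<le> expect_prod m A \<pi>s (\<lambda>a. rh i a - bb i a)"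
      by (rule ep_mono) (use bon i in fastforce)
    show ?thesis using c1 c2 unfolding S_def T_def Mx_def[symmetric] ep_diff by simp
  qed
  have step4: "surrogate_obj m A rh bb \<pi>s \<le> 2 * (MAX i\<in>{..<m}. T i)"
    unfolding so_eq
  proof (rule Max.boundedI)
    show "finite ((S \<pi>s) ` {..<m})" by simp
    show "(S \<pi>s) ` {..<m} \<noteq> {}" using I by simp
    fix x assume "x \<in> (S \<pi>s) ` {..<m}"
    then obtain i where i: "i < m" and x: "x = S \<pi>s i" by auto
    have "T i \<le> (MAX i\<in>{..<m}. T i)" using i by (intro Max_ge) auto
    then show "x \<le> 2 * (MAX i\<in>{..<m}. T i)" using step3[OF i] x by simp
  qed
  show ?thesis using step1 step2 step4 unfolding T_def by simp
qed

theorem theorem1: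
  fixes M :: "'w measure" and \<delta> :: real and m :: nat
    and F :: "'f set" and A :: "nat \<Rightarrow> 'f set set"
    and rf :: "'f \<Rightarrow> nat \<Rightarrow> real"
    and rhat b :: "'w \<Rightarrow> nat \<Rightarrow> 'f joint \<Rightarrow> real"
    and pi_out :: "'w \<Rightarrow> nat \<Rightarrow> 'f set pmf"
  assumes "prob_space M"
    and "0 < \<delta>" and "\<delta> < 1"
    and "m \<ge> 1"
    and "finite F"
    and "\<forall>i<m. A i \<noteq> {} \<and> finite (A i) \<and> A i \<subseteq> Pow F"
    and "\<forall>f\<in>F. \<forall>l\<in>{1..m}. \<bar>rf f l\<bar> \<le> 1"
    and "bonus_term M \<delta> m A rf rhat b"
    and "\<forall>w\<in>space M. is_surrogate_minimizer m A (rhat w) (b w) (pi_out w)"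
  shows "\<exists>E\<in>sets M. measure M E \<ge> 1 - \<delta> \<and>
     (\<forall>w\<in>E. \<forall>\<pi>s. is_NE m A rf \<pi>s \<longrightarrow>
        Gap m A rf (pi_out w) \<le> 2 * (MAX i\<in>{..<m}.
            (MAX a'\<in>A i. expect_prod m A (\<pi>s(i := return_pmf a')) (b w i))
          + expect_prod m A \<pi>s (b w i)))"
proof -
  obtain E where E: "E \<in> sets M" "measure M E \<ge> 1 - \<delta>"
    and good: "\<forall>w\<in>E. \<forall>i<m. \<forall>a\<in>joint_actions m A. \<bar>mean_reward m rf i a - rhat w i a\<bar> \<le> b w i a"
    using assms(8) unfolding bonus_term_def by blast
  have sub: "E \<subseteq> space M" using E(1) by (rule sets.sets_into_space)
  show ?thesis
  proof (intro bexI[OF _ E(1)] conjI E(2) ballI allI impI)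
    fix w \<pi>s assume w: "w \<in> E" and nes: "is_NE m A rf \<pi>s"
    show "Gap m A rf (pi_out w) \<le> 2 * (MAX i\<in>{..<m}.
            (MAX a'\<in>A i. expect_prod m A (\<pi>s(i := return_pmf a')) (b w i))
          + expect_prod m A \<pi>s (b w i))"
      by (rule main_det[OF assms(4) _ _ _ _ nes]) (use assms(6) good w sub assms(9) in auto)
  qed
qed

end
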